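(* For every Halin graph $H$, $AT(H)\le 4$.
   Context: All graphs are finite and simple. A Halin graph $H=T\cup C_n$ is a plane graph obtained from a plane tree $T$ having no vertex of degree two and at least one vertex of degree at least three, by adding a cycle $C_n$ that connects all the leaves of $T$ in the cyclic order determined by the planar drawing of $T$. For a digraph $D$, an Eulerian subdigraph is a spanning subdigraph (a subset of the arcs, possibly empty) in which every vertex has indegree equal to outdegree; it is even or odd according to the parity of its number of arcs. The Alon–Tarsi number $AT(G)$ is the smallest integer $k$ such that $G$ has an orientation $D$ with maximum outdegree at most $k-1$ for which the numbers of even and odd Eulerian subdigraphs of $D$ differ. *)

theory Defs
  imports Main
begin

definition simple_graph :: "'a set \<Rightarrow> 'a set set \<Rightarrow> bool" where
  "simple_graph V E \<longleftrightarrow> finite V \<and>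
     (\<forall>e\<in>E. \<exists>u v. e = {u, v} \<and> u \<noteq> v \<and> u \<in> V \<and> v \<in> V)"

definition nbrs :: "'a set set \<Rightarrow> 'a \<Rightarrow> 'a set" where
  "nbrs E v = {u. {u, v} \<in> E}"

definition deg :: "'a set set \<Rightarrow> 'a \<Rightarrow> nat" where
  "deg E v = card (nbrs E v)"

definition connected_graph :: "'a set \<Rightarrow> 'a set set \<Rightarrow> bool" where
  "connected_graph V E \<longleftrightarrow>
     (\<forall>u\<in>V. \<forall>v\<in>V. (u, v) \<in> {(x, y). {x, y} \<in> E}\<^sup>*)"

definition is_tree :: "'a set \<Rightarrow> 'a set set \<Rightarrow> bool" where
  "is_tree V E \<longleftrightarrow> simple_graph V E \<and> V \<noteq> {} \<and> connected_graph V E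
     \<and> card E + 1 = card V"

text \<open>A planar drawing of a tree is encoded combinatorially by a rotation system:
  at each vertex v, rot v is a cyclic permutation of the neighbours of v.\<close>

definition rotation_system :: "'a set \<Rightarrow> 'a set set \<Rightarrow> ('a \<Rightarrow> 'a \<Rightarrow> 'a) \<Rightarrow> bool" where
  "rotation_system V E rot \<longleftrightarrow>
     (\<forall>v\<in>V. bij_betw (rot v) (nbrs E v) (nbrs E v) \<and>
        (\<forall>x\<in>nbrs E v. \<forall>y\<in>nbrs E v. \<exists>k. (rot v ^^ k) x = y))"

text \<open>Face-tracing map on darts: (u,v) goes to (v, rot v u).  For a plane tree
  its (single) orbit is the boundary walk around the tree.\<close>
definition face_step :: "('a \<Rightarrow> 'a \<Rightarrow> 'a) \<Rightarrow> 'a \<times> 'a \<Rightarrow> 'a \<times> 'a" where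
  "face_step rot d = (snd d, rot (snd d) (fst d))"

definition is_leaf :: "'a set set \<Rightarrow> 'a \<Rightarrow> bool" where
  "is_leaf E v \<longleftrightarrow> deg E v = 1"

text \<open>l' is the leaf following leaf l in the cyclic order of leaves determined
  by the plane tree: walking around the tree starting at the dart entering l,
  l' is the next leaf entered.\<close>
definition leaf_succ :: "'a set set \<Rightarrow> ('a \<Rightarrow> 'a \<Rightarrow> 'a) \<Rightarrow> 'a \<Rightarrow> 'a \<Rightarrow> bool" where
  "leaf_succ E rot l l' \<longleftrightarrow> is_leaf E l \<and> is_leaf E l' \<and>
     (\<exists>u k. {u, l} \<in> E \<and> 0 < k \<and>
        snd ((face_step rot ^^ k) (u, l)) = l' \<and>
        (\<forall>j. 0 < j \<and> j < k \<longrightarrow> \<not> is_leaf E (snd ((face_step rot ^^ j) (u, l)))))"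

definition halin :: "'a set \<Rightarrow> 'a set set \<Rightarrow> bool" where
  "halin V E \<longleftrightarrow> (\<exists>ET rot.
     is_tree V ET \<and> rotation_system V ET rot \<and>
     (\<forall>v\<in>V. deg ET v \<noteq> 2) \<and> (\<exists>v\<in>V. deg ET v \<ge> 3) \<and>
     E = ET \<union> {{l, l'} | l l'. leaf_succ ET rot l l'})"

definition orientation :: "'a set \<Rightarrow> 'a set set \<Rightarrow> ('a \<times> 'a) set \<Rightarrow> bool" where
  "orientation V E D \<longleftrightarrow> (\<forall>(u, v)\<in>D. {u, v} \<in> E) \<and>
     (\<forall>e\<in>E. \<exists>!a. a \<in> D \<and> e = {fst a, snd a})"

definition outdeg :: "('a \<times> 'a) set \<Rightarrow> 'a \<Rightarrow> nat" where
  "outdeg D v = card {w. (v, w) \<in> D}"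

definition indeg :: "('a \<times> 'a) set \<Rightarrow> 'a \<Rightarrow> nat" where
  "indeg D v = card {u. (u, v) \<in> D}"

definition eulerian_sub :: "'a set \<Rightarrow> ('a \<times> 'a) set \<Rightarrow> ('a \<times> 'a) set \<Rightarrow> bool" where
  "eulerian_sub V D S \<longleftrightarrow> S \<subseteq> D \<and> (\<forall>v\<in>V. indeg S v = outdeg S v)"

definition even_euler :: "'a set \<Rightarrow> ('a \<times> 'a) set \<Rightarrow> nat" where
  "even_euler V D = card {S. eulerian_sub V D S \<and> even (card S)}"

definition odd_euler :: "'a set \<Rightarrow> ('a \<times> 'a) set \<Rightarrow> nat" where
  "odd_euler V D = card {S. eulerian_sub V D S \<and> odd (card S)}"

definition AT :: "'a set \<Rightarrow> 'a set set \<Rightarrow> nat" where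
  "AT V E = (LEAST k. \<exists>D. orientation V E D \<and> (\<forall>v\<in>V. outdeg D v + 1 \<le> k)
                \<and> even_euler V D \<noteq> odd_euler V D)"

end

theory Submission
  imports Defs
begin

lemma sg_edge: "simple_graph V E \<Longrightarrow> {u,v} \<in> E \<Longrightarrow> u \<in> V \<and> v \<in> V \<and> u \<noteq> v"
proof -
  assume a: "simple_graph V E" "{u,v} \<in> E"
  then obtain x y where "{u,v} = {x,y}" "x \<noteq> y" "x \<in> V" "y \<in> V" unfolding simple_graph_def by blast
  then show ?thesis by (auto simp: doubleton_eq_iff)
qed

lemma sg_fin_nbrs: "simple_graph V E \<Longrightarrow> finite (nbrs E v)"
proof -
  assume a: "simple_graph V E"
  have "nbrs E v \<subseteq> V" using sg_edge[OF a] unfolding nbrs_def by blast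
  moreover have "finite V" using a by (simp add: simple_graph_def)
  ultimately show ?thesis by (rule finite_subset)
qed

lemma sg_finE: "simple_graph V E \<Longrightarrow> finite E"
proof -
  assume sg: "simple_graph V E"
  have fV: "finite V" using sg by (simp add: simple_graph_def)
  have EP: "E \<subseteq> Pow V"
  proof
    fix e assume "e \<in> E"
    then obtain u v where "e = {u,v}" "u \<in> V" "v \<in> V" using sg unfolding simple_graph_def by blast
    then show "e \<in> Pow V" by simp
  qed
  show ?thesis using finite_subset[OF EP] fV by simp
qed
lemma card2: "card {a, b} \<le> 2"
  by (cases "a = b") auto

lemma handshake:
  assumes sg: "simple_graph V E"
  shows "(\<Sum>v\<in>V. card (nbrs E v)) \<le> 2 * card E"
proof -
  have fV: "finite V" using sg by (simp add: simple_graph_def)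
  have fE: "finite E" using sg_finE[OF sg] .
  define P where "P = (\<lambda>e::'a set. {(a,b). a\<in>e \<and> b\<in>e \<and> a\<noteq>b})"
  have Psub: "P e \<subseteq> V \<times> V" if "e \<in> E" for e
  proof -
    obtain x y where "e = {x,y}" "x \<in> V" "y \<in> V" using sg \<open>e \<in> E\<close> unfolding simple_graph_def by blast
    then show ?thesis unfolding P_def by auto
  qed
  have "(\<Sum>v\<in>V. card (nbrs E v)) = card (Sigma V (nbrs E))"
    using fV sg_fin_nbrs[OF sg] by (simp add: card_SigmaI)
  also have "\<dots> \<le> card (\<Union>e\<in>E. P e)"
  proof (rule card_mono)
    show "finite (\<Union>e\<in>E. P e)"
    proof (rule finite_UN_I[OF fE])
      fix e assume "e \<in> E" then show "finite (P e)" using finite_subset[OF Psub] fV by blast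
    qed
    show "Sigma V (nbrs E) \<subseteq> (\<Union>e\<in>E. P e)"
    proof
      fix z assume "z \<in> Sigma V (nbrs E)"
      then obtain v u where z: "z = (v,u)" "{u,v} \<in> E" by (auto simp: nbrs_def)
      have "u \<noteq> v" using sg_edge[OF sg z(2)] by simp
      then have "z \<in> P {u,v}" using z unfolding P_def by auto
      then show "z \<in> (\<Union>e\<in>E. P e)" using z by blast
    qed
  qed
  also have "\<dots> \<le> (\<Sum>e\<in>E. card (P e))"
    by (rule card_UN_le[OF fE])
  also have "\<dots> \<le> (\<Sum>e\<in>E. 2)"
  proof (rule sum_mono)
    fix e assume "e \<in> E"
    then obtain x y where "e = {x,y}" "x \<noteq> y" using sg unfolding simple_graph_def by blast
    then have "P e = {(x,y),(y,x)}" unfolding P_def by auto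
    then show "card (P e) \<le> 2" using card2[of "(x,y)" "(y,x)"] by simp
  qed
  finally show ?thesis by simp
qed


lemma leaf_exists:
  assumes sg: "simple_graph V E" and conn: "connected_graph V E"
    and cE: "card E + 1 = card V" and two: "2 \<le> card V"
  shows "\<exists>l\<in>V. card (nbrs E l) = 1"
proof (rule ccontr)
  assume na: "\<not> ?thesis"
  have ge1: "1 \<le> card (nbrs E v)" if vV: "v \<in> V" for v
  proof -
    have "V \<noteq> {v}" using two by auto
    then have "\<exists>u\<in>V. u \<noteq> v" using vV by blast
    then obtain u where u: "u \<in> V" "u \<noteq> v" by blast
    have "(v,u) \<in> {(x, y). {x, y} \<in> E}\<^sup>*" using conn vV u(1) unfolding connected_graph_def by blast
    then have "(v,u) \<in> {(x, y). {x, y} \<in> E}\<^sup>+" using u(2) by (simp add: rtrancl_eq_or_trancl)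
    then obtain y where "(v,y) \<in> {(x, y). {x, y} \<in> E}" using tranclD by metis
    then have "y \<in> nbrs E v" by (simp add: nbrs_def insert_commute)
    then have "nbrs E v \<noteq> {}" by blast
    then have "0 < card (nbrs E v)" using sg_fin_nbrs[OF sg, of v] by (simp add: card_gt_0_iff)
    then show ?thesis by simp
  qed
  have ge2: "2 \<le> card (nbrs E v)" if "v \<in> V" for v
  proof -
    have "card (nbrs E v) \<noteq> 1" using na that by blast
    then show ?thesis using ge1[OF that] by linarith
  qed
  have "(\<Sum>v\<in>V. 2) \<le> (\<Sum>v\<in>V. card (nbrs E v))" using ge2 by (intro sum_mono)
  with handshake[OF sg] have "2 * card V \<le> 2 * card E" by simp
  with cE show False by simp
qed

lemma remove_leaf_conn:
  assumes sg: "simple_graph V E" and conn: "connected_graph V E"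
    and nl: "nbrs E l = {p}"
  shows "connected_graph (V - {l}) {e\<in>E. l \<notin> e}"
proof -
  let ?R = "{(x, y). {x, y} \<in> E}"
  let ?R' = "{(x, y). {x, y} \<in> {e\<in>E. l \<notin> e}}"
  have "{p,l} \<in> E" using nl by (simp add: nbrs_def set_eq_iff)
  then have pl: "p \<noteq> l" using sg_edge[OF sg] by blast
  have main: "(u, if x = l then p else x) \<in> ?R'\<^sup>*" if "(u,x) \<in> ?R\<^sup>*" "u \<noteq> l" for u x
    using that(1)
  proof (induction rule: rtrancl_induct)
    case base
    then show ?case using that(2) by simp
  next
    case (step y x)
    have e: "{y,x} \<in> E" using step.hyps(2) by simp
    show ?case
    proof (cases "y = l")
      case True
      then have "x \<in> nbrs E l" using e by (simp add: nbrs_def insert_commute)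
      then have "x = p" using nl by simp
      then show ?thesis using step.IH True pl by simp
    next
      case False
      note yl = False
      show ?thesis
      proof (cases "x = l")
        case True
        then have "y \<in> nbrs E l" using e by (simp add: nbrs_def)
        then have "y = p" using nl by simp
        then show ?thesis using step.IH True yl by simp
      next
        case False
        then have "(y,x) \<in> ?R'" using e yl by simp
        then show ?thesis using step.IH yl False by (simp add: rtrancl_into_rtrancl)
      qed
    qed
  qed
  show ?thesis unfolding connected_graph_def
  proof (intro ballI)
    fix u w assume uw: "u \<in> V - {l}" "w \<in> V - {l}"
    then have "(u,w) \<in> ?R\<^sup>*" using conn unfolding connected_graph_def by blast
    then show "(u,w) \<in> ?R'\<^sup>*" using main[of u w] uw by simp
  qed
qed


lemma leaf_edges:
  assumes sg: "simple_graph V E" and nl: "nbrs E l = {p}"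
  shows "{e\<in>E. l \<notin> e} = E - {{p,l}}" and "{p,l} \<in> E"
proof -
  show pl: "{p,l} \<in> E" using nl by (simp add: nbrs_def set_eq_iff)
  show "{e\<in>E. l \<notin> e} = E - {{p,l}}"
  proof (rule set_eqI)
    fix e
    show "e \<in> {e\<in>E. l \<notin> e} \<longleftrightarrow> e \<in> E - {{p,l}}"
    proof
      assume "e \<in> {e\<in>E. l \<notin> e}"
      then have "e \<in> E" "l \<notin> e" by simp_all
      moreover have "{p,l} \<noteq> e" using \<open>l \<notin> e\<close> by (metis insertI1 insert_commute)
      ultimately show "e \<in> E - {{p,l}}" by simp
    next
      assume a: "e \<in> E - {{p,l}}"
      then have eE: "e \<in> E" and ne: "e \<noteq> {p,l}" by simp_all
      obtain x y where xy: "e = {x,y}" using sg eE unfolding simple_graph_def by blast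
      have "l \<notin> e"
      proof
        assume "l \<in> e"
        then have "l = x \<or> l = y" using xy by simp
        then show False
        proof
          assume "l = x"
          then have "{y,l} \<in> E" using eE xy by (simp add: insert_commute)
          then have "y \<in> nbrs E l" by (simp add: nbrs_def)
          then have "y = p" using nl by simp
          then show False using ne xy \<open>l = x\<close> by (simp add: insert_commute)
        next
          assume "l = y"
          then have "{x,l} \<in> E" using eE xy by simp
          then have "x \<in> nbrs E l" by (simp add: nbrs_def)
          then have "x = p" using nl by simp
          then show False using ne xy \<open>l = y\<close> by simp
        qed
      qed
      then show "e \<in> {e\<in>E. l \<notin> e}" using eE by simp
    qed
  qed
qed

lemma remove_leaf_sg:
  assumes sg: "simple_graph V E"
  shows "simple_graph (V - {l}) {e\<in>E. l \<notin> e}"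
  unfolding simple_graph_def
proof (intro conjI ballI)
  show "finite (V - {l})" using sg by (simp add: simple_graph_def)
  fix e assume "e \<in> {e\<in>E. l \<notin> e}"
  then have eE: "e \<in> E" and le: "l \<notin> e" by simp_all
  obtain x y where xy: "e = {x,y}" "x \<noteq> y" "x \<in> V" "y \<in> V" using sg eE unfolding simple_graph_def by blast
  have "x \<noteq> l" "y \<noteq> l" using le xy(1) by auto
  then show "\<exists>u v. e = {u, v} \<and> u \<noteq> v \<and> u \<in> V - {l} \<and> v \<in> V - {l}" using xy by blast
qed

lemma tree_rank:
  assumes "simple_graph V E" "connected_graph V E" "card E + 1 = card V" "V \<noteq> {}"
  shows "\<exists>f::'a \<Rightarrow> nat. inj_on f V \<and> (\<forall>v\<in>V. card {w. {w,v} \<in> E \<and> f w < f v} \<le> 1)"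
  using assms
proof (induction "card V" arbitrary: V E)
  case 0
  then have "finite V" by (simp add: simple_graph_def)
  then show ?case using 0 by simp
next
  case (Suc n)
  note sg = Suc.prems(1) and conn = Suc.prems(2) and cE = Suc.prems(3)
  have fV: "finite V" using sg by (simp add: simple_graph_def)
  show ?case
  proof (cases "card V = 1")
    case True
    then obtain v where V: "V = {v}" by (rule card_1_singletonE)
    have "inj_on (\<lambda>_. 0::nat) V" using V by simp
    moreover have "\<forall>v\<in>V. card {w. {w,v} \<in> E \<and> (0::nat) < 0} \<le> 1" by simp
    ultimately show ?thesis by blast
  next
    case False
    then have two: "2 \<le> card V" using Suc.hyps by linarith
    obtain l where lV: "l \<in> V" and cl: "card (nbrs E l) = 1" using leaf_exists[OF sg conn cE two] by blast
    obtain p where nl: "nbrs E l = {p}" using card_1_singletonE[OF cl] by blast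
    have plE: "{p,l} \<in> E" and E'eq: "{e\<in>E. l \<notin> e} = E - {{p,l}}" using leaf_edges[OF sg nl] by simp_all
    have pl: "p \<noteq> l" "p \<in> V" using sg_edge[OF sg plE] by simp_all
    define V' where "V' = V - {l}"
    define E' where "E' = {e\<in>E. l \<notin> e}"
    have sg': "simple_graph V' E'" unfolding V'_def E'_def by (rule remove_leaf_sg[OF sg])
    have conn': "connected_graph V' E'" unfolding V'_def E'_def by (rule remove_leaf_conn[OF sg conn nl])
    have cV': "card V' = n" unfolding V'_def using Suc.hyps lV fV by simp
    have fE: "finite E" by (rule sg_finE[OF sg])
    have "card E' = card E - 1" unfolding E'_def E'eq using plE fE by simp
    have "0 < card E" using plE fE card_gt_0_iff by blast
    then have cE': "card E' + 1 = card V'" using cE cV' Suc.hyps \<open>card E' = card E - 1\<close> by linarith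
    have ne': "V' \<noteq> {}" unfolding V'_def using pl by blast
    obtain f' :: "'a \<Rightarrow> nat" where inj': "inj_on f' V'" and cnt': "\<forall>v\<in>V'. card {w. {w,v} \<in> E' \<and> f' w < f' v} \<le> 1"
      using Suc.hyps(1)[OF cV'[symmetric] sg' conn' cE' ne'] by blast
    define M where "M = Suc (Max (f' ` V'))"
    define f where "f = (\<lambda>x. if x = l then M else f' x)"
    have fV': "finite V'" using fV unfolding V'_def by simp
    have big: "f' x < M" if "x \<in> V'" for x
      unfolding M_def using that fV' by (simp add: le_imp_less_Suc)
    have "inj_on f V"
    proof (rule inj_onI)
      fix x y assume xy: "x \<in> V" "y \<in> V" "f x = f y"
      show "x = y"
      proof (cases "x = l")
        case True
        show ?thesis
        proof (rule ccontr)
          assume "x \<noteq> y"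
          then have "y \<in> V'" "y \<noteq> l" using True xy(2) unfolding V'_def by simp_all
          then have "f y < M" using big unfolding f_def by simp
          moreover have "f x = M" using True unfolding f_def by simp
          ultimately show False using xy(3) by simp
        qed
      next
        case False
        then have xV': "x \<in> V'" using xy(1) unfolding V'_def by simp
        show ?thesis
        proof (cases "y = l")
          case True
          then have "f x < M" using big xV' False unfolding f_def by simp
          moreover have "f y = M" using True unfolding f_def by simp
          ultimately show ?thesis using xy(3) by simp
        next
          case yl: False
          then have yV': "y \<in> V'" using xy(2) unfolding V'_def by simp
          have "f' x = f' y" using xy(3) False yl unfolding f_def by simp
          then show ?thesis using inj' xV' yV' by (simp add: inj_on_eq_iff)
        qed
      qed
    qed
    moreover have "card {w. {w,v} \<in> E \<and> f w < f v} \<le> 1" if vV: "v \<in> V" for v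
    proof (cases "v = l")
      case True
      have "{w. {w,v} \<in> E \<and> f w < f v} \<subseteq> {p}"
      proof
        fix w assume "w \<in> {w. {w,v} \<in> E \<and> f w < f v}"
        then have "w \<in> nbrs E l" using True by (simp add: nbrs_def)
        then show "w \<in> {p}" using nl by simp
      qed
      then have "card {w. {w,v} \<in> E \<and> f w < f v} \<le> card {p}" by (intro card_mono) simp_all
      then show ?thesis by simp
    next
      case False
      then have vV': "v \<in> V'" unfolding V'_def using vV by simp
      have sub: "{w. {w,v} \<in> E \<and> f w < f v} \<subseteq> {w. {w,v} \<in> E' \<and> f' w < f' v}"
      proof
        fix w assume "w \<in> {w. {w,v} \<in> E \<and> f w < f v}"
        then have w: "{w,v} \<in> E" "f w < f v" by simp_all
        have "w \<noteq> l"
        proof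
          assume "w = l"
          then have "f w = M" unfolding f_def by simp
          moreover have "f v = f' v" using False unfolding f_def by simp
          ultimately show False using w(2) big[OF vV'] by simp
        qed
        then have "l \<notin> {w,v}" using False by simp
        then have "{w,v} \<in> E'" unfolding E'_def using w(1) by simp
        moreover have "f' w < f' v" using w(2) \<open>w \<noteq> l\<close> False unfolding f_def by simp
        ultimately show "w \<in> {w. {w,v} \<in> E' \<and> f' w < f' v}" by simp
      qed
      have "finite {w. {w,v} \<in> E' \<and> f' w < f' v}"
        using sg_fin_nbrs[OF sg', of v] by (rule rev_finite_subset) (auto simp: nbrs_def)
      then have "card {w. {w,v} \<in> E \<and> f w < f v} \<le> card {w. {w,v} \<in> E' \<and> f' w < f' v}"
        using sub by (rule card_mono)
      moreover have "card {w. {w,v} \<in> E' \<and> f' w < f' v} \<le> 1" using cnt' vV' by blast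
      ultimately show ?thesis by linarith
    qed
    ultimately show ?thesis by blast
  qed
qed


lemma two_smaller:
  fixes f :: "'a \<Rightarrow> nat"
  assumes sg: "simple_graph V E"
    and cnt: "\<forall>v\<in>V. card {w. {w,v} \<in> E \<and> f w < f v} \<le> 1"
    and aV: "a \<in> V" and b: "{b,a} \<in> E" "f b < f a" and c: "{c,a} \<in> E" "f c < f a"
  shows "b = c"
proof -
  have fin: "finite {w. {w,a} \<in> E \<and> f w < f a}"
    using sg_fin_nbrs[OF sg, of a] by (rule rev_finite_subset) (auto simp: nbrs_def)
  have "card {w. {w,a} \<in> E \<and> f w < f a} \<le> Suc 0" using cnt aV by simp
  then have "\<forall>x\<in>{w. {w,a} \<in> E \<and> f w < f a}. \<forall>y\<in>{w. {w,a} \<in> E \<and> f w < f a}. x = y"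
    using card_le_Suc0_iff_eq[OF fin] by blast
  moreover have "b \<in> {w. {w,a} \<in> E \<and> f w < f a}" "c \<in> {w. {w,a} \<in> E \<and> f w < f a}" using b c by simp_all
  ultimately show ?thesis by blast
qed

lemma nb_walk:
  fixes f :: "'a \<Rightarrow> nat" and w :: "nat \<Rightarrow> 'a"
  assumes sg: "simple_graph V E" and inj: "inj_on f V"
    and cnt: "\<forall>v\<in>V. card {w. {w,v} \<in> E \<and> f w < f v} \<le> 1"
  shows "0 < k \<Longrightarrow> (\<forall>i<k. {w i, w (Suc i)} \<in> E) \<Longrightarrow> (\<forall>i. Suc i < k \<longrightarrow> w (Suc (Suc i)) \<noteq> w i) \<Longrightarrow> w 0 \<noteq> w k"
proof (induction k arbitrary: w rule: less_induct)
  case (less k)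
  note kpos = less.prems(1) and edges = less.prems(2) and nbt = less.prems(3)
  have edge: "{w i, w (Suc i)} \<in> E" if "i < k" for i using edges that by blast
  have adj: "w i \<in> V \<and> w (Suc i) \<in> V \<and> w i \<noteq> w (Suc i)" if "i < k" for i
    using sg_edge[OF sg edge[OF that]] .
  show ?case
  proof
    assume cl: "w 0 = w k"
    have inV: "w i \<in> V" if "i \<le> k" for i
    proof (cases "i < k")
      case True then show ?thesis using adj by blast
    next
      case False then have "i = k" using that by simp
      then show ?thesis using cl adj[OF kpos] by simp
    qed
    have finI: "finite ((\<lambda>i. f (w i)) ` {..k})" by simp
    have "Max ((\<lambda>i. f (w i)) ` {..k}) \<in> (\<lambda>i. f (w i)) ` {..k}" using finI by (intro Max_in) auto
    then obtain i0 where i0m': "Max ((\<lambda>i. f (w i)) ` {..k}) = f (w i0)" and i0k': "i0 \<in> {..k}" by (rule imageE)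
    have i0k: "i0 \<le> k" using i0k' by simp
    have i0m: "f (w i0) = Max ((\<lambda>i. f (w i)) ` {..k})" using i0m' by simp
    have mx: "f (w i) \<le> f (w i0)" if "i \<le> k" for i
      unfolding i0m using finI that by (intro Max_ge) auto
    have strict: "f (w j) < f (w i)" if "j \<le> k" "i \<le> k" "w j \<noteq> w i" "f (w j) \<le> f (w i)" for i j
    proof -
      have "f (w j) \<noteq> f (w i)" using inj inV that by (metis inj_on_eq_iff)
      then show ?thesis using that(4) by simp
    qed
    show False
    proof (cases "0 < i0 \<and> i0 < k")
      case True
      obtain j where j: "i0 = Suc j" using True by (cases i0) auto
      have e1: "{w j, w i0} \<in> E" using edge[of j] j True by simp
      have e2: "{w (Suc i0), w i0} \<in> E" using edge[of i0] True by (simp add: insert_commute)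
      have d1: "w j \<noteq> w i0" using adj[of j] j True by simp
      have d2: "w (Suc i0) \<noteq> w i0" using adj[of i0] True by metis
      have s1: "f (w j) < f (w i0)" using strict[of j i0] mx[of j] d1 j i0k by simp
      have s2: "f (w (Suc i0)) < f (w i0)" using strict[of "Suc i0" i0] mx[of "Suc i0"] d2 True i0k by simp
      have "w j = w (Suc i0)" using two_smaller[OF sg cnt inV[OF i0k] e1 s1 e2 s2] .
      moreover have "w (Suc (Suc j)) \<noteq> w j" using nbt True j by simp
      ultimately show False using j by simp
    next
      case False
      then have "i0 = 0 \<or> i0 = k" using i0k by auto
      then have w0i0: "w i0 = w 0" using cl by auto
      have mx0: "f (w i) \<le> f (w 0)" if "i \<le> k" for i using mx[OF that] w0i0 by simp
      obtain k1 where k1: "k = Suc k1" using kpos by (cases k) auto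
      have e1: "{w 1, w 0} \<in> E" using edge[of 0] kpos by (simp add: insert_commute)
      have e2: "{w k1, w 0} \<in> E" using edge[of k1] k1 cl by simp
      have d1: "w 1 \<noteq> w 0" using adj[of 0] kpos by (metis One_nat_def)
      have d2: "w k1 \<noteq> w 0" using adj[of k1] k1 cl by simp
      have s1: "f (w 1) < f (w 0)" using strict[of 1 0] mx0[of 1] d1 k1 by simp
      have s2: "f (w k1) < f (w 0)" using strict[of k1 0] mx0[of k1] d2 k1 by simp
      have eq: "w 1 = w k1" using two_smaller[OF sg cnt inV[of 0] e1 s1 e2 s2] by simp
      show False
      proof (cases "k1 = 0")
        case True then show False using eq d1 by simp
      next
        case False
        show False
        proof (cases "k1 = 1")
          case True
          then have "w (Suc (Suc 0)) \<noteq> w 0" using nbt k1 by simp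
          then show False using cl k1 True by (simp add: numeral_2_eq_2)
        next
          case k1n: False
          define w' where "w' = (\<lambda>i. w (Suc i))"
          define k' where "k' = k1 - 1"
          have kk: "k' < k" "0 < k'" using k1 False k1n unfolding k'_def by simp_all
          have "w' 0 \<noteq> w' k'"
          proof (rule less.IH[OF kk(1) kk(2)])
            show "\<forall>i<k'. {w' i, w' (Suc i)} \<in> E" using edge unfolding w'_def k'_def k1 by simp
            show "\<forall>i. Suc i < k' \<longrightarrow> w' (Suc (Suc i)) \<noteq> w' i" using nbt unfolding w'_def k'_def k1 by simp
          qed
          moreover have "Suc k' = k1" using False k1n unfolding k'_def by simp
          ultimately show False using eq unfolding w'_def by simp
        qed
      qed
    qed
  qed
qed


lemma dart_step:
  assumes sg: "simple_graph V ET" and rs: "rotation_system V ET rot" and e: "{u,v} \<in> ET"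
  shows "{v, rot v u} \<in> ET"
proof -
  have vV: "v \<in> V" using sg_edge[OF sg e] by simp
  have "u \<in> nbrs ET v" using e by (simp add: nbrs_def)
  moreover have "bij_betw (rot v) (nbrs ET v) (nbrs ET v)" using rs vV unfolding rotation_system_def by blast
  ultimately have "rot v u \<in> nbrs ET v" by (meson bij_betwE)
  then show ?thesis by (simp add: nbrs_def insert_commute)
qed

lemma dart_iter:
  assumes sg: "simple_graph V ET" and rs: "rotation_system V ET rot" and d: "{fst d, snd d} \<in> ET"
  shows "{fst ((face_step rot ^^ n) d), snd ((face_step rot ^^ n) d)} \<in> ET"
proof (induction n)
  case 0 then show ?case using d by simp
next
  case (Suc n)
  then show ?case using dart_step[OF sg rs Suc] by (simp add: face_step_def)
qed

lemma step_inj: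
  assumes sg: "simple_graph V ET" and rs: "rotation_system V ET rot"
    and e1: "{a,b} \<in> ET" and e2: "{c,d} \<in> ET" and eq: "face_step rot (a,b) = face_step rot (c,d)"
  shows "(a,b) = (c,d)"
proof -
  have pe: "(b, rot b a) = (d, rot d c)" using eq unfolding face_step_def by (simp only: fst_conv snd_conv)
  have bd: "b = d" using arg_cong[where f=fst, OF pe] unfolding fst_conv .
  have r: "rot b a = rot d c" using arg_cong[where f=snd, OF pe] unfolding snd_conv .
  have bV: "b \<in> V" using sg_edge[OF sg e1] by simp
  have "inj_on (rot b) (nbrs ET b)" using rs bV unfolding rotation_system_def bij_betw_def by blast
  moreover have "a \<in> nbrs ET b" "c \<in> nbrs ET b" using e1 e2 bd by (simp_all add: nbrs_def)
  ultimately have "a = c" using r bd by (simp add: inj_on_eq_iff)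
  then show ?thesis using bd by simp
qed

lemma iter_inj:
  assumes sg: "simple_graph V ET" and rs: "rotation_system V ET rot"
  shows "{fst d1, snd d1} \<in> ET \<Longrightarrow> {fst d2, snd d2} \<in> ET \<Longrightarrow> (face_step rot ^^ n) d1 = (face_step rot ^^ n) d2 \<Longrightarrow> d1 = d2"
proof (induction n)
  case 0 then show ?case by simp
next
  case (Suc n)
  let ?x = "(face_step rot ^^ n) d1" and ?y = "(face_step rot ^^ n) d2"
  have ex: "{fst ?x, snd ?x} \<in> ET" by (rule dart_iter[OF sg rs Suc.prems(1)])
  have ey: "{fst ?y, snd ?y} \<in> ET" by (rule dart_iter[OF sg rs Suc.prems(2)])
  have "face_step rot (fst ?x, snd ?x) = face_step rot (fst ?y, snd ?y)" using Suc.prems(3) by simp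
  then have "(fst ?x, snd ?x) = (fst ?y, snd ?y)" by (rule step_inj[OF sg rs ex ey])
  then have "?x = ?y" by (simp add: prod_eq_iff)
  then show ?case using Suc.IH Suc.prems by simp
qed

lemma leaf_nbr:
  assumes "is_leaf E l" shows "\<exists>p. nbrs E l = {p}"
  using assms unfolding is_leaf_def deg_def by (meson card_1_singletonE)

lemma rot_nofix:
  assumes rs: "rotation_system V ET rot" and vV: "v \<in> V" and u: "u \<in> nbrs ET v"
    and fin: "finite (nbrs ET v)" and c2: "2 \<le> card (nbrs ET v)"
  shows "rot v u \<noteq> u"
proof
  assume fx: "rot v u = u"
  have it: "(rot v ^^ k) u = u" for k
    by (induction k) (simp_all add: fx)
  have "\<forall>y\<in>nbrs ET v. y = u"
  proof
    fix y assume "y \<in> nbrs ET v"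
    then obtain k where "(rot v ^^ k) u = y" using rs vV u unfolding rotation_system_def by blast
    then show "y = u" using it by simp
  qed
  then have "nbrs ET v \<subseteq> {u}" by blast
  then have "card (nbrs ET v) \<le> card {u}" by (intro card_mono) simp_all
  then show False using c2 by simp
qed

lemma leaf_in_V:
  assumes sg: "simple_graph V E" and "is_leaf E l" shows "l \<in> V"
proof -
  obtain p where "nbrs E l = {p}" using leaf_nbr[OF assms(2)] by blast
  then have pl: "{p,l} \<in> E" by (simp add: nbrs_def set_eq_iff)
  show ?thesis using sg_edge[OF sg pl] by simp
qed

lemma leaf_succ_fun:
  assumes sg: "simple_graph V ET" and a: "leaf_succ ET rot l a" and b: "leaf_succ ET rot l b"
  shows "a = b"
proof -
  obtain u k where u: "{u,l} \<in> ET" "0 < k" "snd ((face_step rot ^^ k) (u, l)) = a"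
    "\<forall>j. 0 < j \<and> j < k \<longrightarrow> \<not> is_leaf ET (snd ((face_step rot ^^ j) (u, l)))"
    and la: "is_leaf ET l" "is_leaf ET a"
    using a unfolding leaf_succ_def by blast
  obtain u' k' where u': "{u',l} \<in> ET" "0 < k'" "snd ((face_step rot ^^ k') (u', l)) = b"
    "\<forall>j. 0 < j \<and> j < k' \<longrightarrow> \<not> is_leaf ET (snd ((face_step rot ^^ j) (u', l)))"
    and lb: "is_leaf ET b"
    using b unfolding leaf_succ_def by blast
  obtain p where nl: "nbrs ET l = {p}" using leaf_nbr[OF la(1)] by blast
  have "u \<in> nbrs ET l" "u' \<in> nbrs ET l" using u(1) u'(1) by (simp_all add: nbrs_def)
  then have uu: "u = u'" using nl by simp
  show ?thesis
  proof (cases k k' rule: linorder_cases)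
    case less
    then have "\<not> is_leaf ET (snd ((face_step rot ^^ k) (u', l)))" using u'(4) u(2) by simp
    then show ?thesis using u(3) la(2) uu by simp
  next
    case equal
    then show ?thesis using u(3) u'(3) uu by simp
  next
    case greater
    then have "\<not> is_leaf ET (snd ((face_step rot ^^ k') (u, l)))" using u(4) u'(2) by simp
    then show ?thesis using u'(3) lb uu by simp
  qed
qed

lemma leaf_succ_inj_aux:
  assumes sg: "simple_graph V ET" and rs: "rotation_system V ET rot"
    and da: "{ua,a} \<in> ET" and db: "{ub,b} \<in> ET" and la: "is_leaf ET a"
    and kk: "ka \<le> kb" and ka: "0 < ka"
    and eq: "(face_step rot ^^ ka) (ua,a) = (face_step rot ^^ kb) (ub,b)"
    and nlb: "\<forall>j. 0 < j \<and> j < kb \<longrightarrow> \<not> is_leaf ET (snd ((face_step rot ^^ j) (ub, b)))"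
  shows "a = b"
proof -
  let ?g = "face_step rot"
  define m where "m = kb - ka"
  have "(?g ^^ kb) (ub,b) = (?g ^^ ka) ((?g ^^ m) (ub,b))"
  proof -
    have "kb = ka + m" unfolding m_def using kk by simp
    then show ?thesis by (simp add: funpow_add)
  qed
  then have eq2: "(?g ^^ ka) (ua,a) = (?g ^^ ka) ((?g ^^ m) (ub,b))" using eq by simp
  have dm: "{fst ((?g ^^ m) (ub,b)), snd ((?g ^^ m) (ub,b))} \<in> ET" using dart_iter[OF sg rs, of "(ub,b)"] db by simp
  have "(ua,a) = (?g ^^ m) (ub,b)" using iter_inj[OF sg rs _ dm eq2] da by simp
  show ?thesis
  proof (cases "m = 0")
    case True then show ?thesis using \<open>(ua,a) = (?g ^^ m) (ub,b)\<close> by simp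
  next
    case False
    then have "0 < m \<and> m < kb" unfolding m_def using ka kk by simp
    then have "\<not> is_leaf ET (snd ((?g ^^ m) (ub, b)))" using nlb by blast
    then show ?thesis using la \<open>(ua,a) = (?g ^^ m) (ub,b)\<close> by (metis snd_conv)
  qed
qed

lemma leaf_succ_inj:
  assumes sg: "simple_graph V ET" and rs: "rotation_system V ET rot"
    and a: "leaf_succ ET rot a l" and b: "leaf_succ ET rot b l"
  shows "a = b"
proof -
  let ?g = "face_step rot"
  obtain ua ka where A: "{ua,a} \<in> ET" "0 < ka" "snd ((?g ^^ ka) (ua, a)) = l"
    "\<forall>j. 0 < j \<and> j < ka \<longrightarrow> \<not> is_leaf ET (snd ((?g ^^ j) (ua, a)))"
    and la: "is_leaf ET a" "is_leaf ET l"
    using a unfolding leaf_succ_def by blast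
  obtain ub kb where B: "{ub,b} \<in> ET" "0 < kb" "snd ((?g ^^ kb) (ub, b)) = l"
    "\<forall>j. 0 < j \<and> j < kb \<longrightarrow> \<not> is_leaf ET (snd ((?g ^^ j) (ub, b)))"
    and lb: "is_leaf ET b"
    using b unfolding leaf_succ_def by blast
  obtain p where nl: "nbrs ET l = {p}" using leaf_nbr[OF la(2)] by blast
  have ea: "{fst ((?g ^^ ka) (ua, a)), snd ((?g ^^ ka) (ua, a))} \<in> ET" using dart_iter[OF sg rs, of "(ua,a)"] A(1) by simp
  have "fst ((?g ^^ ka) (ua, a)) \<in> nbrs ET l" using ea A(3) by (simp add: nbrs_def)
  then have "(?g ^^ ka) (ua, a) = (p, l)" using nl A(3) by (simp add: prod_eq_iff)
  moreover
  have eb: "{fst ((?g ^^ kb) (ub, b)), snd ((?g ^^ kb) (ub, b))} \<in> ET" using dart_iter[OF sg rs, of "(ub,b)"] B(1) by simp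
  have "fst ((?g ^^ kb) (ub, b)) \<in> nbrs ET l" using eb B(3) by (simp add: nbrs_def)
  then have "(?g ^^ kb) (ub, b) = (p, l)" using nl B(3) by (simp add: prod_eq_iff)
  ultimately have eq: "(?g ^^ ka) (ua, a) = (?g ^^ kb) (ub, b)" by simp
  show ?thesis
  proof (cases "ka \<le> kb")
    case True
    show ?thesis by (rule leaf_succ_inj_aux[OF sg rs A(1) B(1) la(1) True A(2) eq B(4)])
  next
    case False
    then have "kb \<le> ka" by simp
    from leaf_succ_inj_aux[OF sg rs B(1) A(1) lb this B(2) eq[symmetric] A(4)] show ?thesis by simp
  qed
qed


lemma leaf_succ_irrefl:
  fixes f :: "'a \<Rightarrow> nat"
  assumes sg: "simple_graph V ET" and rs: "rotation_system V ET rot"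
    and deg2: "\<forall>v\<in>V. deg ET v \<noteq> 2"
    and inj: "inj_on f V" and cnt: "\<forall>v\<in>V. card {w. {w,v} \<in> ET \<and> f w < f v} \<le> 1"
  shows "\<not> leaf_succ ET rot l l"
proof
  assume ls: "leaf_succ ET rot l l"
  let ?g = "face_step rot"
  obtain u k where A: "{u,l} \<in> ET" "0 < k" "snd ((?g ^^ k) (u, l)) = l"
    "\<forall>j. 0 < j \<and> j < k \<longrightarrow> \<not> is_leaf ET (snd ((?g ^^ j) (u, l)))"
    using ls unfolding leaf_succ_def by blast
  define w where "w = (\<lambda>i. snd ((?g ^^ i) (u, l)))"
  have fstS: "fst ((?g ^^ Suc i) (u,l)) = w i" for i
    unfolding w_def by (simp add: face_step_def)
  have sndSS: "w (Suc (Suc i)) = rot (w (Suc i)) (w i)" for i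
  proof -
    have "w (Suc (Suc i)) = snd (?g ((?g ^^ Suc i) (u,l)))" unfolding w_def by simp
    also have "\<dots> = rot (snd ((?g ^^ Suc i) (u,l))) (fst ((?g ^^ Suc i) (u,l)))" by (simp add: face_step_def)
    also have "\<dots> = rot (w (Suc i)) (w i)" using fstS[of i] unfolding w_def by simp
    finally show ?thesis .
  qed
  have edges: "{w i, w (Suc i)} \<in> ET" for i
  proof -
    have "{fst ((?g ^^ Suc i) (u,l)), snd ((?g ^^ Suc i) (u,l))} \<in> ET"
      using dart_iter[OF sg rs, of "(u,l)" "Suc i"] A(1) by simp
    then show ?thesis using fstS[of i] unfolding w_def by simp
  qed
  have nbt: "w (Suc (Suc i)) \<noteq> w i" if "Suc i < k" for i
  proof -
    have "\<not> is_leaf ET (snd ((?g ^^ Suc i) (u,l)))" by (rule A(4)[rule_format]) (use that in simp)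
    then have nl: "\<not> is_leaf ET (w (Suc i))" unfolding w_def .
    have e: "{w i, w (Suc i)} \<in> ET" by (rule edges)
    have vV: "w (Suc i) \<in> V" using sg_edge[OF sg e] by simp
    have un: "w i \<in> nbrs ET (w (Suc i))" using e by (simp add: nbrs_def)
    have fin: "finite (nbrs ET (w (Suc i)))" by (rule sg_fin_nbrs[OF sg])
    have c0: "card (nbrs ET (w (Suc i))) \<noteq> 0" using fin un by auto
    have c1: "card (nbrs ET (w (Suc i))) \<noteq> 1" using nl unfolding is_leaf_def deg_def .
    have c2: "card (nbrs ET (w (Suc i))) \<noteq> 2" using deg2 vV unfolding deg_def by blast
    have "2 \<le> card (nbrs ET (w (Suc i)))" using c0 c1 c2 by linarith
    then have "rot (w (Suc i)) (w i) \<noteq> w i" by (rule rot_nofix[OF rs vV un fin])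
    then show ?thesis using sndSS[of i] by simp
  qed
  have "w 0 \<noteq> w k"
    using nb_walk[OF sg inj cnt, of k w] A(2) edges nbt by blast
  moreover have "w 0 = l" unfolding w_def by simp
  moreover have "w k = l" unfolding w_def using A(3) .
  ultimately show False by simp
qed

lemma subsingleton_card:
  assumes "\<forall>a\<in>S. \<forall>b\<in>S. a = b" shows "finite S \<and> card S \<le> 1"
proof (cases "S = {}")
  case True then show ?thesis by simp
next
  case False
  then obtain x where x: "x \<in> S" by blast
  then have "S = {x}" using assms by blast
  then show ?thesis by simp
qed

theorem lemma3p2:
  fixes V :: "'a set" and E :: "'a set set"
  assumes "halin V E"
  shows "AT V E \<le> 4"
proof -
  obtain ET rot where T: "is_tree V ET" and rs: "rotation_system V ET rot"
    and deg2: "\<forall>v\<in>V. deg ET v \<noteq> 2"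
    and Edef: "E = ET \<union> {{l, l'} | l l'. leaf_succ ET rot l l'}"
    using assms unfolding halin_def by blast
  have sg: "simple_graph V ET" and conn: "connected_graph V ET" and cE: "card ET + 1 = card V"
    and ne: "V \<noteq> {}" using T unfolding is_tree_def by simp_all
  obtain f :: "'a \<Rightarrow> nat" where inj: "inj_on f V" and cnt: "\<forall>v\<in>V. card {w. {w,v} \<in> ET \<and> f w < f v} \<le> 1"
    using tree_rank[OF sg conn cE ne] by blast
  have irr: "\<not> leaf_succ ET rot l l" for l by (rule leaf_succ_irrefl[OF sg rs deg2 inj cnt])
  have fV: "finite V" using sg by (simp add: simple_graph_def)
  have sgE: "simple_graph V E" unfolding simple_graph_def
  proof (intro conjI ballI)
    show "finite V" by (rule fV)
    fix e assume "e \<in> E"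
    then have "e \<in> ET \<or> e \<in> {{l, l'} | l l'. leaf_succ ET rot l l'}" using Edef by simp
    then show "\<exists>u v. e = {u, v} \<and> u \<noteq> v \<and> u \<in> V \<and> v \<in> V"
    proof
      assume "e \<in> ET" then show ?thesis using sg unfolding simple_graph_def by blast
    next
      assume "e \<in> {{l, l'} | l l'. leaf_succ ET rot l l'}"
      then obtain l l' where e: "e = {l,l'}" and ls: "leaf_succ ET rot l l'" by blast
      have "is_leaf ET l" "is_leaf ET l'" using ls unfolding leaf_succ_def by simp_all
      then have "l \<in> V" "l' \<in> V" using leaf_in_V[OF sg] by simp_all
      moreover have "l \<noteq> l'" using ls irr by metis
      ultimately show ?thesis using e by blast
    qed
  qed
  define D where "D = {(u,v). {u,v} \<in> E \<and> f v < f u}"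
  have orient: "orientation V E D" unfolding orientation_def
  proof (intro conjI ballI)
    fix a assume "a \<in> D"
    then show "case a of (u, v) \<Rightarrow> {u, v} \<in> E" unfolding D_def by auto
  next
    fix e assume eE: "e \<in> E"
    then obtain x y where xy: "e = {x,y}" "x \<noteq> y" "x \<in> V" "y \<in> V" using sgE unfolding simple_graph_def by blast
    have fne: "f x \<noteq> f y" using inj xy by (metis inj_on_eq_iff)
    have uniq: "a = b" if "a \<in> D" "e = {fst a, snd a}" "b \<in> D" "e = {fst b, snd b}" for a b
    proof -
      obtain a1 a2 where a: "a = (a1,a2)" by (cases a)
      obtain b1 b2 where b: "b = (b1,b2)" by (cases b)
      have fa: "f a2 < f a1" and fb: "f b2 < f b1" using that a b unfolding D_def by simp_all
      have "{a1,a2} = {b1,b2}" using that a b by simp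
      then have "(a1 = b1 \<and> a2 = b2) \<or> (a1 = b2 \<and> a2 = b1)" by (simp add: doubleton_eq_iff)
      then show ?thesis using fa fb a b by auto
    qed
    show "\<exists>!a. a \<in> D \<and> e = {fst a, snd a}"
    proof (cases "f y < f x")
      case True
      have "(x,y) \<in> D" using True eE xy unfolding D_def by simp
      then show ?thesis using uniq xy(1) by (intro ex1I[of _ "(x,y)"]) auto
    next
      case False
      then have "f x < f y" using fne by simp
      then have "(y,x) \<in> D" using eE xy unfolding D_def by (simp add: insert_commute)
      then show ?thesis using uniq xy(1) by (intro ex1I[of _ "(y,x)"]) (auto simp: insert_commute)
    qed
  qed
  have outb: "outdeg D v + 1 \<le> 4" if vV: "v \<in> V" for v
  proof -
    have od: "outdeg D v = card {w. {v,w} \<in> E \<and> f w < f v}" unfolding outdeg_def D_def by simp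
    have finA: "finite {w. {v,w} \<in> E \<and> f w < f v}"
      using sg_fin_nbrs[OF sgE, of v] by (rule rev_finite_subset) (auto simp: nbrs_def insert_commute)
    show ?thesis
    proof (cases "is_leaf ET v")
      case True
      let ?A = "nbrs ET v" and ?B = "{w. leaf_succ ET rot v w}" and ?C = "{w. leaf_succ ET rot w v}"
      have sub: "{w. {v,w} \<in> E \<and> f w < f v} \<subseteq> ?A \<union> ?B \<union> ?C"
      proof
        fix w assume "w \<in> {w. {v,w} \<in> E \<and> f w < f v}"
        then have "{v,w} \<in> ET \<or> {v,w} \<in> {{l, l'} | l l'. leaf_succ ET rot l l'}" using Edef by simp
        then show "w \<in> ?A \<union> ?B \<union> ?C"
        proof
          assume "{v,w} \<in> ET" then show ?thesis by (simp add: nbrs_def insert_commute)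
        next
          assume "{v,w} \<in> {{l, l'} | l l'. leaf_succ ET rot l l'}"
          then obtain l l' where e: "{v,w} = {l,l'}" and ls: "leaf_succ ET rot l l'" by blast
          then have "(v = l \<and> w = l') \<or> (v = l' \<and> w = l)" by (simp add: doubleton_eq_iff)
          then show ?thesis using ls by auto
        qed
      qed
      obtain p where "?A = {p}" using leaf_nbr[OF True] by blast
      then have cA: "card ?A \<le> 1" by simp
      have cB: "card ?B \<le> 1" using subsingleton_card[of ?B] leaf_succ_fun[OF sg] by blast
      have cC: "card ?C \<le> 1" using subsingleton_card[of ?C] leaf_succ_inj[OF sg rs] by blast
      have fA: "finite ?A" by (rule sg_fin_nbrs[OF sg])
      have fB: "finite ?B" using subsingleton_card[of ?B] leaf_succ_fun[OF sg] by blast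
      have fC: "finite ?C" using subsingleton_card[of ?C] leaf_succ_inj[OF sg rs] by blast
      have "card {w. {v,w} \<in> E \<and> f w < f v} \<le> card (?A \<union> ?B \<union> ?C)"
        using sub fA fB fC by (intro card_mono) simp_all
      also have "\<dots> \<le> card (?A \<union> ?B) + card ?C" by (rule card_Un_le)
      also have "\<dots> \<le> card ?A + card ?B + card ?C" using card_Un_le[of ?A ?B] by simp
      finally show ?thesis using od cA cB cC by simp
    next
      case False
      have sub: "{w. {v,w} \<in> E \<and> f w < f v} \<subseteq> {w. {w,v} \<in> ET \<and> f w < f v}"
      proof
        fix w assume w: "w \<in> {w. {v,w} \<in> E \<and> f w < f v}"
        then have "{v,w} \<in> ET \<or> {v,w} \<in> {{l, l'} | l l'. leaf_succ ET rot l l'}" using Edef by simp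
        then have "{v,w} \<in> ET"
        proof
          assume "{v,w} \<in> {{l, l'} | l l'. leaf_succ ET rot l l'}"
          then obtain l l' where e: "{v,w} = {l,l'}" and ls: "leaf_succ ET rot l l'" by blast
          then have "v = l \<or> v = l'" by (simp add: doubleton_eq_iff) blast
          then have "is_leaf ET v" using ls unfolding leaf_succ_def by blast
          then show ?thesis using False by simp
        qed simp
        then show "w \<in> {w. {w,v} \<in> ET \<and> f w < f v}" using w by (simp add: insert_commute)
      qed
      have "finite {w. {w,v} \<in> ET \<and> f w < f v}"
        using sg_fin_nbrs[OF sg, of v] by (rule rev_finite_subset) (auto simp: nbrs_def)
      then have "card {w. {v,w} \<in> E \<and> f w < f v} \<le> card {w. {w,v} \<in> ET \<and> f w < f v}"
        using sub by (rule card_mono)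
      then show ?thesis using od cnt vV by fastforce
    qed
  qed
  have acyc: "S = {}" if es: "eulerian_sub V D S" for S
  proof (rule ccontr)
    assume "S \<noteq> {}"
    then obtain a b where ab: "(a,b) \<in> S" by auto
    have SD: "S \<subseteq> D" and bal: "\<forall>v\<in>V. indeg S v = outdeg S v" using es unfolding eulerian_sub_def by simp_all
    obtain v where Pv: "\<exists>u. (u,v) \<in> S" and mn: "\<forall>y. (\<exists>u. (u,y) \<in> S) \<longrightarrow> f v \<le> f y"
      using ex_has_least_nat[of "\<lambda>x. \<exists>u. (u,x) \<in> S" b f] ab by blast
    obtain u where uv: "(u,v) \<in> S" using Pv by blast
    have arcE: "{x,y} \<in> E \<and> f y < f x" if "(x,y) \<in> S" for x y using that SD unfolding D_def by blast
    have vV: "v \<in> V" using sg_edge[OF sgE conjunct1[OF arcE[OF uv]]] by simp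
    have finin: "finite {x. (x,v) \<in> S}"
    proof (rule finite_subset[OF _ fV])
      show "{x. (x,v) \<in> S} \<subseteq> V"
      proof
        fix x assume "x \<in> {x. (x,v) \<in> S}"
        then have "{x,v} \<in> E" using arcE by blast
        then show "x \<in> V" using sg_edge[OF sgE] by simp
      qed
    qed
    have "0 < indeg S v" unfolding indeg_def using finin uv by (auto simp: card_gt_0_iff)
    then have "0 < outdeg S v" using bal vV by simp
    then have "{x. (v,x) \<in> S} \<noteq> {}" unfolding outdeg_def by (metis card.empty less_irrefl)
    then obtain x where vx: "(v,x) \<in> S" by blast
    then have "f x < f v" using arcE by blast
    moreover have "f v \<le> f x" using mn vx by blast
    ultimately show False by simp
  qed
  have e0: "eulerian_sub V D {}" unfolding eulerian_sub_def indeg_def outdeg_def by simp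
  have "{S. eulerian_sub V D S \<and> even (card S)} = {{}}"
  proof (rule set_eqI)
    fix S
    show "S \<in> {S. eulerian_sub V D S \<and> even (card S)} \<longleftrightarrow> S \<in> {{}}"
    proof
      assume "S \<in> {S. eulerian_sub V D S \<and> even (card S)}"
      then have "S = {}" using acyc by blast
      then show "S \<in> {{}}" by simp
    next
      assume "S \<in> {{}}"
      then have "S = {}" by simp
      then show "S \<in> {S. eulerian_sub V D S \<and> even (card S)}" using e0 by simp
    qed
  qed
  then have ev: "even_euler V D = 1" unfolding even_euler_def by simp
  have O0: "{S. eulerian_sub V D S \<and> odd (card S)} = {}"
  proof (rule equals0I)
    fix S assume "S \<in> {S. eulerian_sub V D S \<and> odd (card S)}"
    then have "S = {}" "odd (card S)" using acyc by blast+
    then show False by simp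
  qed
  have od: "odd_euler V D = 0" by (simp only: odd_euler_def O0 card.empty)
  have P4: "\<exists>D. orientation V E D \<and> (\<forall>v\<in>V. outdeg D v + 1 \<le> 4) \<and> even_euler V D \<noteq> odd_euler V D"
    using orient outb ev od by auto
  show ?thesis unfolding AT_def
    by (rule Least_le[where P="\<lambda>k. \<exists>D. orientation V E D \<and> (\<forall>v\<in>V. outdeg D v + 1 \<le> k) \<and> even_euler V D \<noteq> odd_euler V D" and k=4, OF P4])
qed

end
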